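(* Let $\kappa,\nu,\mu,\theta$ be cardinals, and suppose that a partition $p:[\kappa]^2\to\mu$ and a coloring $c:[\kappa]^2\to\theta$ have a common coarsening $q:[\kappa]^2\to\nu$ that is not constant. Then $c$ does not witness $\kappa\nrightarrow_p[\kappa]^2_\theta$.
   Context: $[\kappa]^2$ denotes the set of pairs $(\alpha,\beta)$ with $\alpha<\beta<\kappa$. For functions $q:X\to\nu$ and $p:X\to\mu$, $q$ is a coarsening of $p$ iff $p(x)=p(y)$ implies $q(x)=q(y)$ for all $x,y\in X$. Given a partition $p:[\kappa]^2\to\mu$, a coloring $c:[\kappa]^2\to\theta$ witnesses $\kappa\nrightarrow_p[\kappa]^2_\theta$ iff for every $A\subseteq\kappa$ with $|A|=\kappa$ and every function $\tau:\mu\to\theta$ there is a pair $(\alpha,\beta)$ with $\alpha<\beta$ both in $A$ such that $c(\alpha,\beta)=\tau(p(\alpha,\beta))$. *)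

theory Defs
  imports Main "HOL-Library.FuncSet"
begin

text \<open>The cardinal kappa is represented by a cardinal order relation r (an initial
well-order); its elements are Field r, ordered by r.  [kappa]^2 is the set of
strictly increasing pairs.\<close>

definition pairs2 :: "'a rel \<Rightarrow> ('a \<times> 'a) set" where
  "pairs2 r = {(\<alpha>, \<beta>). (\<alpha>, \<beta>) \<in> r \<and> \<alpha> \<noteq> \<beta>}"

definition coarsening_on :: "'x set \<Rightarrow> ('x \<Rightarrow> 'n) \<Rightarrow> ('x \<Rightarrow> 'm) \<Rightarrow> bool" where
  "coarsening_on X q p \<longleftrightarrow> (\<forall>x\<in>X. \<forall>y\<in>X. p x = p y \<longrightarrow> q x = q y)"

definition witnesses_neg_partition ::
  "'a rel \<Rightarrow> ('a \<times> 'a \<Rightarrow> 'm) \<Rightarrow> 'm set \<Rightarrow> ('a \<times> 'a \<Rightarrow> 't) \<Rightarrow> 't set \<Rightarrow> bool" where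
  "witnesses_neg_partition r p M c T \<longleftrightarrow>
     (\<forall>A. A \<subseteq> Field r \<and> (card_of A, r) \<in> ordIso \<longrightarrow>
        (\<forall>\<tau> \<in> M \<rightarrow> T. \<exists>\<alpha> \<beta>. (\<alpha>, \<beta>) \<in> pairs2 r \<and> \<alpha> \<in> A \<and> \<beta> \<in> A \<and>
                         c (\<alpha>, \<beta>) = \<tau> (p (\<alpha>, \<beta>))))"

end

theory Submission
  imports Defs
begin

theorem proposition2p2:
  fixes r :: "'a rel" and M :: "'m set" and N :: "'n set" and T :: "'t set"
    and p :: "'a \<times> 'a \<Rightarrow> 'm" and c :: "'a \<times> 'a \<Rightarrow> 't" and q :: "'a \<times> 'a \<Rightarrow> 'n"
  assumes "Card_order r"
    and "Card_order \<mu>" and "Field \<mu> = M"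
    and "Card_order \<nu>" and "Field \<nu> = N"
    and "Card_order \<theta>" and "Field \<theta> = T"
    and "p \<in> pairs2 r \<rightarrow> M" and "c \<in> pairs2 r \<rightarrow> T" and "q \<in> pairs2 r \<rightarrow> N"
    and "coarsening_on (pairs2 r) q p" and "coarsening_on (pairs2 r) q c"
    and "\<exists>x \<in> pairs2 r. \<exists>y \<in> pairs2 r. q x \<noteq> q y"
  shows "\<not> witnesses_neg_partition r p M c T"
proof
  assume W: "witnesses_neg_partition r p M c T"
  define P where "P = pairs2 r"
  obtain x0 where x0: "x0 \<in> P" using assms(13) P_def by auto
  have ex: "\<exists>y\<in>P. q y \<noteq> q x" for x using assms(13) P_def by metis
  define \<tau> where "\<tau> m = (if \<exists>x\<in>P. p x = m
      then c (SOME y. y\<in>P \<and> q y \<noteq> q (SOME x. x\<in>P \<and> p x = m)) else c x0)" for m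
  have tT: "\<tau> \<in> M \<rightarrow> T"
  proof
    fix m assume "m \<in> M"
    show "\<tau> m \<in> T"
    proof (cases "\<exists>x\<in>P. p x = m")
      case True
      then have "(SOME y. y\<in>P \<and> q y \<noteq> q (SOME x. x\<in>P \<and> p x = m)) \<in> P"
        by (metis (mono_tags, lifting) ex someI_ex)
      then show ?thesis using True assms(9) P_def \<tau>_def by auto
    next
      case False
      then show ?thesis using x0 assms(9) P_def \<tau>_def by auto
    qed
  qed
  have A: "Field r \<subseteq> Field r \<and> (card_of (Field r), r) \<in> ordIso"
    using card_of_Field_ordIso[OF assms(1)] by simp
  obtain \<alpha> \<beta> where ab: "(\<alpha>, \<beta>) \<in> P" "c (\<alpha>, \<beta>) = \<tau> (p (\<alpha>, \<beta>))"
    using W A tT unfolding witnesses_neg_partition_def P_def by blast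
  define z where "z = (\<alpha>, \<beta>)"
  have zP: "z \<in> P" and cz: "c z = \<tau> (p z)" using ab z_def by auto
  define x where "x = (SOME x. x\<in>P \<and> p x = p z)"
  have xP: "x \<in> P \<and> p x = p z" unfolding x_def by (rule someI[of _ z]) (use zP in auto)
  define y where "y = (SOME y. y\<in>P \<and> q y \<noteq> q x)"
  have yP: "y \<in> P \<and> q y \<noteq> q x" unfolding y_def by (metis (mono_tags, lifting) ex someI_ex)
  have "\<tau> (p z) = c y" using zP unfolding \<tau>_def y_def x_def by auto
  then have "c z = c y" using cz by simp
  then have "q z = q y" using assms(12) zP yP unfolding coarsening_on_def P_def by blast
  moreover have "q x = q z" using assms(11) zP xP unfolding coarsening_on_def P_def by blast
  ultimately show False using yP by simp
qed

end
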